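(* Let $\Gamma$ be a labeled graph with $V$ vertices and $E$ edges, let $k\ge0$ and let $D,C_1,\ldots,C_V$ be symbols. Then $$\big(\lambda_\Gamma(C_1,\ldots,C_V)\big)_{,\mu_1\ldots\mu_k}J^{\mu_1\nu_1}\cdots J^{\mu_k\nu_k}D_{,\nu_1\ldots\nu_k}=\sum_{\Gamma'}\lambda_{\Gamma'}(C_1,\ldots,C_V,D),$$ where the sum runs over all labeled graphs $\Gamma'$ with $V+1$ vertices and $E+k$ edges obtained from $\Gamma$ (keeping its vertex and edge labels) by adding a vertex labeled $V+1$ and $k$ edges labeled $E+1,\ldots,E+k$, each joining some vertex of $\Gamma$ to the vertex $V+1$.
   Context: Coordinates $z=(z^1,\ldots,z^{2N})=(x,p)$ on $T^*\mathbb{R}^N$, $(J^{\mu\nu})=\begin{pmatrix}0&I_N\\-I_N&0\end{pmatrix}$, $C_{,\mu_1\ldots\mu_k}$ denotes partial derivatives, repeated indices summed. A labeled graph with $V$ vertices and $E$ edges is a map $s:\{1,\ldots,E\}\to\mathcal{P}_2\{1,\ldots,V\}$ (edge $e$ joins the vertices in $s(e)$); an edge with $s(e)=\{i,j\}$, $i<j$, is oriented $i\to j$. $\lambda_\Gamma(C_1,\ldots,C_V)$: place $C_v$ at vertex $v$ and a factor $J^{\mu_e\nu_e}$ at each edge $e$, differentiate $C_v$ by $\partial_{z^{\mu_e}}$ for each edge $e$ leaving $v$ and by $\partial_{z^{\nu_e}}$ for each edge entering $v$, multiply and sum over all indices. *)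

theory Defs
  imports "HOL-Analysis.Analysis"
begin

text \<open>Phase space T*R^N = R^N x R^N, points z = (x,p). Coordinate indices
  are Inl i (the x-coordinates z^1..z^N) and Inr i (the p-coordinates z^{N+1}..z^{2N}).\<close>

type_synonym 'n phase = "(real ^ 'n) \<times> (real ^ 'n)"
type_synonym 'n idx = "'n + 'n"

definition coord_vec :: "'n::finite idx \<Rightarrow> 'n phase" where
  "coord_vec \<mu> = (case \<mu> of Inl i \<Rightarrow> (axis i 1, 0) | Inr i \<Rightarrow> (0, axis i 1))"

definition Jmat :: "'n::finite idx \<Rightarrow> 'n idx \<Rightarrow> real" where
  "Jmat \<mu> \<nu> = (case (\<mu>, \<nu>) of
      (Inl i, Inr j) \<Rightarrow> (if i = j then 1 else 0)
    | (Inr i, Inl j) \<Rightarrow> (if i = j then -1 else 0)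
    | _ \<Rightarrow> 0)"

definition pd :: "'n::finite idx \<Rightarrow> ('n phase \<Rightarrow> complex) \<Rightarrow> ('n phase \<Rightarrow> complex)" where
  "pd \<mu> f = (\<lambda>z. frechet_derivative f (at z) (coord_vec \<mu>))"

fun pds :: "'n::finite idx list \<Rightarrow> ('n phase \<Rightarrow> complex) \<Rightarrow> ('n phase \<Rightarrow> complex)" where
  "pds [] f = f"
| "pds (\<mu> # \<mu>s) f = pds \<mu>s (pd \<mu> f)"

definition smooth_symbol :: "('n::finite phase \<Rightarrow> complex) \<Rightarrow> bool" where
  "smooth_symbol f \<longleftrightarrow> (\<forall>\<mu>s. pds \<mu>s f differentiable_on UNIV)"

definition labeled_graph :: "nat \<Rightarrow> nat \<Rightarrow> (nat \<Rightarrow> nat set) \<Rightarrow> bool" where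
  "labeled_graph V E s \<longleftrightarrow>
     (\<forall>e\<in>{1..E}. card (s e) = 2 \<and> s e \<subseteq> {1..V}) \<and> (\<forall>e. e \<notin> {1..E} \<longrightarrow> s e = {})"

text \<open>Derivative indices acting on vertex v, given index assignment m (m e = (mu_e, nu_e)):
  edge e with s e = {i,j}, i<j, is oriented i -> j; it contributes mu_e at i and nu_e at j.\<close>
definition vertex_indices :: "nat \<Rightarrow> (nat \<Rightarrow> nat set) \<Rightarrow> (nat \<Rightarrow> 'i \<times> 'i) \<Rightarrow> nat \<Rightarrow> 'i list" where
  "vertex_indices E s m v =
     concat (map (\<lambda>e. if v \<in> s e then (if v = Min (s e) then [fst (m e)] else [snd (m e)]) else [])
                 [1..<E+1])"

definition lambda_graph :: "nat \<Rightarrow> nat \<Rightarrow> (nat \<Rightarrow> nat set) \<Rightarrow> (nat \<Rightarrow> ('n::finite phase \<Rightarrow> complex))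
    \<Rightarrow> ('n phase \<Rightarrow> complex)" where
  "lambda_graph V E s C = (\<lambda>z.
     \<Sum>m \<in> Pi\<^sub>E {1..E} (\<lambda>_. (UNIV :: ('n idx \<times> 'n idx) set)).
       (\<Prod>e\<in>{1..E}. complex_of_real (Jmat (fst (m e)) (snd (m e)))) *
       (\<Prod>v\<in>{1..V}. pds (vertex_indices E s m v) (C v) z))"

end

theory Submission imports Defs begin

lemma pds_append: "pds (xs @ ys) f = pds ys (pds xs f)"
  by (induction xs arbitrary: f) auto

lemma smooth_pds: "smooth_symbol f \<Longrightarrow> smooth_symbol (pds xs f)"
  unfolding smooth_symbol_def by (metis pds_append)

lemma smooth_diff: "smooth_symbol f \<Longrightarrow> pds xs f differentiable (at z)"
  unfolding smooth_symbol_def differentiable_on_def by (metis UNIV_I)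

lemma pd_eq: "(f has_derivative f') (at z) \<Longrightarrow> pd \<mu> f z = f' (coord_vec \<mu>)"
  unfolding pd_def using frechet_derivative_at by metis

lemma pd_snoc: "pd \<mu> (pds xs f) = pds (xs @ [\<mu>]) f"
  by (simp add: pds_append)

lemma pd_sum_lin:
  assumes "finite M" "\<And>m. m \<in> M \<Longrightarrow> g m differentiable (at z)"
  shows "pd \<mu> (\<lambda>z. \<Sum>m\<in>M. c m * g m z) z = (\<Sum>m\<in>M. c m * pd \<mu> (g m) z)"
proof -
  have "((\<lambda>z. \<Sum>m\<in>M. c m * g m z) has_derivative
     (\<lambda>h. \<Sum>m\<in>M. c m * frechet_derivative (g m) (at z) h)) (at z)"
    using assms by (intro has_derivative_sum has_derivative_mult_right)
       (simp add: frechet_derivative_works)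
  from pd_eq[OF this] show ?thesis by (simp add: pd_def)
qed

lemma prod_if_one:
  assumes "finite I" "u \<in> I"
  shows "(\<Prod>v\<in>I. if v = u then a else b v) = a * (\<Prod>v\<in>I - {u}. b v)"
proof -
  have "(\<Prod>v\<in>I - {u}. if v = u then a else b v) = (\<Prod>v\<in>I - {u}. b v)"
    by (rule prod.cong) auto
  then show ?thesis using assms by (simp add: prod.remove[of I u])
qed

lemma pd_prod:
  fixes g :: "'v \<Rightarrow> 'n::finite phase \<Rightarrow> complex"
  assumes "finite I" "\<And>v. v \<in> I \<Longrightarrow> g v differentiable (at z)"
  shows "pd \<mu> (\<lambda>z. \<Prod>v\<in>I. g v z) z = (\<Sum>u\<in>I. \<Prod>v\<in>I. if v = u then pd \<mu> (g v) z else g v z)"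
proof -
  have "((\<lambda>z. \<Prod>v\<in>I. g v z) has_derivative
     (\<lambda>h. \<Sum>i\<in>I. frechet_derivative (g i) (at z) h * (\<Prod>j\<in>I - {i}. g j z))) (at z)"
    using assms by (intro has_derivative_prod) (simp add: frechet_derivative_works)
  from pd_eq[OF this] have "pd \<mu> (\<lambda>z. \<Prod>v\<in>I. g v z) z =
     (\<Sum>i\<in>I. pd \<mu> (g i) z * (\<Prod>j\<in>I - {i}. g j z))" by (simp add: pd_def)
  also have "\<dots> = (\<Sum>u\<in>I. \<Prod>v\<in>I. if v = u then pd \<mu> (g v) z else g v z)"
  proof (rule sum.cong)
    fix x assume x: "x \<in> I"
    have "(\<Prod>v\<in>I. if v = x then pd \<mu> (g v) z else g v z) = (\<Prod>v\<in>I. if v = x then pd \<mu> (g x) z else g v z)"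
      by (rule prod.cong) auto
    then show "pd \<mu> (g x) z * (\<Prod>j\<in>I - {x}. g j z) = (\<Prod>v\<in>I. if v = x then pd \<mu> (g v) z else g v z)"
      using prod_if_one[OF assms(1) x, of "pd \<mu> (g x) z" "\<lambda>v. g v z"] by simp
  qed simp
  finally show ?thesis .
qed

lemma differentiable_prod':
  fixes g :: "'v \<Rightarrow> 'n::finite phase \<Rightarrow> complex"
  assumes "\<And>v. v \<in> I \<Longrightarrow> g v differentiable (at z)"
  shows "(\<lambda>z. \<Prod>v\<in>I. g v z) differentiable (at z)"
proof -
  have "((\<lambda>z. \<Prod>v\<in>I. g v z) has_derivative
     (\<lambda>h. \<Sum>i\<in>I. frechet_derivative (g i) (at z) h * (\<Prod>j\<in>I - {i}. g j z))) (at z)"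
    using assms by (intro has_derivative_prod) (simp add: frechet_derivative_works)
  then show ?thesis by (rule differentiableI)
qed

lemma pd_sum:
  assumes "finite M" "\<And>m. m \<in> M \<Longrightarrow> g m differentiable (at z)"
  shows "pd \<mu> (\<lambda>z. \<Sum>m\<in>M. g m z) z = (\<Sum>m\<in>M. pd \<mu> (g m) z)"
  using pd_sum_lin[OF assms, where c="\<lambda>_. 1" and \<mu>=\<mu>] by simp

lemma filter_upd_last:
  "filter (\<lambda>j. (w(Suc k := u)) j = v) [1..<Suc k+1] =
   filter (\<lambda>j. w j = v) [1..<k+1] @ (if u = v then [Suc k] else [])"
proof -
  have "filter (\<lambda>j. (w(Suc k := u)) j = v) [1..<k+1] = filter (\<lambda>j. w j = v) [1..<k+1]"
    by (rule filter_cong) auto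
  then show ?thesis by simp
qed

lemma leibniz:
  fixes f :: "'v \<Rightarrow> 'n::finite phase \<Rightarrow> complex"
  assumes I: "finite I" and sm: "\<And>v. v \<in> I \<Longrightarrow> smooth_symbol (f v)"
  shows "pds (map \<mu> [1..<k+1]) (\<lambda>z. \<Prod>v\<in>I. pds (L v) (f v) z) z =
    (\<Sum>w\<in>Pi\<^sub>E {1..k} (\<lambda>_. I). \<Prod>v\<in>I. pds (L v @ map \<mu> (filter (\<lambda>j. w j = v) [1..<k+1])) (f v) z)"
proof (induction k arbitrary: z)
  case 0
  then show ?case by simp
next
  case (Suc k)
  define G where "G w v = pds (L v @ map \<mu> (filter (\<lambda>j. w j = v) [1..<k+1])) (f v)" for w v
  have IH: "pds (map \<mu> [1..<k+1]) (\<lambda>z. \<Prod>v\<in>I. pds (L v) (f v) z) =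
     (\<lambda>z. \<Sum>w\<in>Pi\<^sub>E {1..k} (\<lambda>_. I). \<Prod>v\<in>I. G w v z)"
    using Suc.IH unfolding G_def by auto
  have dG: "G w v differentiable (at z)" if "v \<in> I" for w v z
    unfolding G_def using smooth_diff sm that by blast
  have fin: "finite (Pi\<^sub>E {1..k} (\<lambda>_. I))" using I by (simp add: finite_PiE)
  have "pds (map \<mu> [1..<Suc k+1]) (\<lambda>z. \<Prod>v\<in>I. pds (L v) (f v) z) z =
     pd (\<mu> (Suc k)) (pds (map \<mu> [1..<k+1]) (\<lambda>z. \<Prod>v\<in>I. pds (L v) (f v) z)) z"
    by (simp add: pds_append)
  also have "\<dots> = (\<Sum>w\<in>Pi\<^sub>E {1..k} (\<lambda>_. I). pd (\<mu> (Suc k)) (\<lambda>z. \<Prod>v\<in>I. G w v z) z)"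
    unfolding IH by (rule pd_sum[OF fin]) (auto intro!: differentiable_prod' dG)
  also have "\<dots> = (\<Sum>w\<in>Pi\<^sub>E {1..k} (\<lambda>_. I). \<Sum>u\<in>I. \<Prod>v\<in>I. if v = u then pd (\<mu> (Suc k)) (G w v) z else G w v z)"
    by (rule sum.cong[OF refl], rule pd_prod[OF I]) (auto intro: dG)
  also have "\<dots> = (\<Sum>(u, w)\<in>I \<times> Pi\<^sub>E {1..k} (\<lambda>_. I). \<Prod>v\<in>I. if v = u then pd (\<mu> (Suc k)) (G w v) z else G w v z)"
    by (subst sum.swap) (simp add: sum.cartesian_product)
  also have "\<dots> = (\<Sum>w'\<in>Pi\<^sub>E {1..Suc k} (\<lambda>_. I). \<Prod>v\<in>I. pds (L v @ map \<mu> (filter (\<lambda>j. w' j = v) [1..<Suc k+1])) (f v) z)"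
  proof -
    have eq: "{1..Suc k} = insert (Suc k) {1..k}" by auto
    have inj: "inj_on (\<lambda>(y, g). g(Suc k := y)) (I \<times> Pi\<^sub>E {1..k} (\<lambda>_. I))"
      using inj_combinator[of "Suc k" "{1..k}" "\<lambda>_. I"] by simp
    show ?thesis
      unfolding eq PiE_insert_eq sum.reindex[OF inj]
    proof (rule sum.cong[OF refl])
      fix x assume "x \<in> I \<times> Pi\<^sub>E {1..k} (\<lambda>_. I)"
      obtain u w where x: "x = (u, w)" by fastforce
      have h: "(\<Prod>v\<in>I. if v = u then pd (\<mu> (Suc k)) (G w v) z else G w v z) =
         (\<Prod>v\<in>I. pds (L v @ map \<mu> (filter (\<lambda>j. (w(Suc k := u)) j = v) [1..<Suc k+1])) (f v) z)"
        unfolding filter_upd_last by (intro prod.cong refl) (auto simp: G_def pd_snoc)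
      show "(case x of (u, w) \<Rightarrow> \<Prod>v\<in>I. if v = u then pd (\<mu> (Suc k)) (G w v) z else G w v z) =
         ((\<lambda>w'. \<Prod>v\<in>I. pds (L v @ map \<mu> (filter (\<lambda>j. w' j = v) [1..<Suc k+1])) (f v) z) \<circ> (\<lambda>(y, g). g(Suc k := y))) x"
        unfolding x comp_def prod.case by (rule h)
    qed
  qed
  finally show ?case .
qed

lemma list_as_map: "xs = map (\<lambda>j. xs ! (j - 1)) [1..<length xs + 1]"
  by (rule nth_equalityI) (simp_all del: upt_Suc)

lemma smooth_prod:
  fixes f :: "'v \<Rightarrow> 'n::finite phase \<Rightarrow> complex"
  assumes I: "finite I" and sm: "\<And>v. v \<in> I \<Longrightarrow> smooth_symbol (f v)"
  shows "smooth_symbol (\<lambda>z. \<Prod>v\<in>I. pds (L v) (f v) z)"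
  unfolding smooth_symbol_def differentiable_on_def
proof (intro allI ballI)
  fix xs :: "'n idx list" and z :: "'n phase"
  define \<mu> where "\<mu> j = xs ! (j - 1)" for j
  have "pds xs (\<lambda>z. \<Prod>v\<in>I. pds (L v) (f v) z) = pds (map \<mu> [1..<length xs+1]) (\<lambda>z. \<Prod>v\<in>I. pds (L v) (f v) z)"
    using list_as_map[of xs] unfolding \<mu>_def by simp
  also have "\<dots> = (\<lambda>z. \<Sum>w\<in>Pi\<^sub>E {1..length xs} (\<lambda>_. I). \<Prod>v\<in>I. pds (L v @ map \<mu> (filter (\<lambda>j. w j = v) [1..<length xs+1])) (f v) z)"
    by (rule ext, rule leibniz[OF I sm])
  finally have eq: "pds xs (\<lambda>z. \<Prod>v\<in>I. pds (L v) (f v) z) = \<dots>" .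
  have "(\<lambda>z. \<Sum>w\<in>Pi\<^sub>E {1..length xs} (\<lambda>_. I). \<Prod>v\<in>I. pds (L v @ map \<mu> (filter (\<lambda>j. w j = v) [1..<length xs+1])) (f v) z) differentiable (at z)"
    using I by (intro differentiable_sum ballI differentiable_prod') (auto simp: finite_PiE smooth_diff sm)
  then show "pds xs (\<lambda>z. \<Prod>v\<in>I. pds (L v) (f v) z) differentiable (at z within UNIV)"
    by (simp add: eq)
qed

lemma pds_lin:
  assumes M: "finite M" and sm: "\<And>m. m \<in> M \<Longrightarrow> smooth_symbol (F m)"
  shows "pds xs (\<lambda>z. \<Sum>m\<in>M. c m * F m z) = (\<lambda>z. \<Sum>m\<in>M. c m * pds xs (F m) z)"
proof (induction xs rule: rev_induct)
  case Nil
  then show ?case by simp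
next
  case (snoc x xs)
  show ?case
  proof
    fix z
    have "pds (xs @ [x]) (\<lambda>z. \<Sum>m\<in>M. c m * F m z) z = pd x (\<lambda>z. \<Sum>m\<in>M. c m * pds xs (F m) z) z"
      by (simp add: pds_append snoc.IH)
    also have "\<dots> = (\<Sum>m\<in>M. c m * pd x (pds xs (F m)) z)"
      by (rule pd_sum_lin[OF M]) (simp add: smooth_diff sm)
    finally show "pds (xs @ [x]) (\<lambda>z. \<Sum>m\<in>M. c m * F m z) z = (\<Sum>m\<in>M. c m * pds (xs @ [x]) (F m) z)"
      by (simp add: pd_snoc)
  qed
qed

definition ext_graph :: "nat \<Rightarrow> nat \<Rightarrow> nat \<Rightarrow> (nat \<Rightarrow> nat set) \<Rightarrow> (nat \<Rightarrow> nat) \<Rightarrow> nat \<Rightarrow> nat set" where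
  "ext_graph V E k s w = (\<lambda>e. if e \<in> {E+1..E+k} then {w (e - E), V+1} else s e)"

lemma ext_graph_out: "e \<notin> {E+1..E+k} \<Longrightarrow> ext_graph V E k s w e = s e"
  unfolding ext_graph_def by (rule if_not_P)

lemma ext_graph_in: "e \<in> {E+1..E+k} \<Longrightarrow> ext_graph V E k s w e = {w (e - E), V+1}"
  unfolding ext_graph_def by (rule if_P)

definition comb :: "nat \<Rightarrow> nat \<Rightarrow> (nat \<Rightarrow> 'a) \<Rightarrow> (nat \<Rightarrow> 'a) \<Rightarrow> nat \<Rightarrow> 'a" where
  "comb E k m mn = (\<lambda>e. if e \<le> E then m e else if e \<le> E + k then mn (e - E) else undefined)"

lemma concat_split:
  "concat (map g [1..<E+k+1]) = concat (map g [1..<E+1]) @ concat (map (\<lambda>j. g (E+j)) [1..<k+1])"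
  by (induction k) (simp_all del: upt_Suc add: upt_Suc_append)

lemma concat_filter:
  "concat (map (\<lambda>j. if P j then [f j] else []) xs) = map f (filter P xs)"
  by (induction xs) auto

lemma concat_single:
  "concat (map (\<lambda>j. [f j]) xs) = map f xs"
  by (induction xs) auto

lemma VI_old:
  assumes lg: "labeled_graph V E s" and w: "w \<in> Pi\<^sub>E {1..k} (\<lambda>_. {1..V})" and v: "v \<in> {1..V}"
  shows "vertex_indices (E+k) (ext_graph V E k s w) (comb E k m mn) v =
     vertex_indices E s m v @ map (\<lambda>j. fst (mn j)) (filter (\<lambda>j. w j = v) [1..<k+1])"
proof -
  have A: "concat (map (\<lambda>e. if v \<in> ext_graph V E k s w e then (if v = Min (ext_graph V E k s w e) then [fst (comb E k m mn e)] else [snd (comb E k m mn e)]) else []) [1..<E+1])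
     = vertex_indices E s m v"
    unfolding vertex_indices_def
    by (rule arg_cong[where f=concat], rule map_cong) (auto simp: ext_graph_def comb_def)
  have B: "concat (map (\<lambda>j. if v \<in> ext_graph V E k s w (E+j) then (if v = Min (ext_graph V E k s w (E+j)) then [fst (comb E k m mn (E+j))] else [snd (comb E k m mn (E+j))]) else []) [1..<k+1])
     = concat (map (\<lambda>j. if w j = v then [fst (mn j)] else []) [1..<k+1])"
  proof (rule arg_cong[where f=concat], rule map_cong[OF refl])
    fix j assume "j \<in> set [1..<k+1]"
    then have j: "j \<in> {1..k}" by auto
    then have wj: "w j \<in> {1..V}" using w by auto
    then have mn: "Min {w j, V+1} = w j" by auto
    show "(if v \<in> ext_graph V E k s w (E+j) then (if v = Min (ext_graph V E k s w (E+j)) then [fst (comb E k m mn (E+j))] else [snd (comb E k m mn (E+j))]) else [])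
        = (if w j = v then [fst (mn j)] else [])"
      using j v wj mn by (auto simp: ext_graph_def comb_def)
  qed
  show ?thesis
    unfolding vertex_indices_def[of "E+k"] concat_split A B concat_filter by simp
qed

lemma VI_new:
  assumes lg: "labeled_graph V E s" and w: "w \<in> Pi\<^sub>E {1..k} (\<lambda>_. {1..V})"
  shows "vertex_indices (E+k) (ext_graph V E k s w) (comb E k m mn) (V+1) =
     map (\<lambda>j. snd (mn j)) [1..<k+1]"
proof -
  have A: "concat (map (\<lambda>e. if V+1 \<in> ext_graph V E k s w e then (if V+1 = Min (ext_graph V E k s w e) then [fst (comb E k m mn e)] else [snd (comb E k m mn e)]) else []) [1..<E+1])
     = []"
  proof -
    have "V+1 \<notin> ext_graph V E k s w e" if "e \<in> set [1..<E+1]" for e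
    proof -
      have e: "e \<in> {1..E}" using that by auto
      then have "s e \<subseteq> {1..V}" using lg by (auto simp: labeled_graph_def)
      then show ?thesis using e by (auto simp: ext_graph_def)
    qed
    then show ?thesis by simp
  qed
  have B: "concat (map (\<lambda>j. if V+1 \<in> ext_graph V E k s w (E+j) then (if V+1 = Min (ext_graph V E k s w (E+j)) then [fst (comb E k m mn (E+j))] else [snd (comb E k m mn (E+j))]) else []) [1..<k+1])
     = concat (map (\<lambda>j. [snd (mn j)]) [1..<k+1])"
  proof (rule arg_cong[where f=concat], rule map_cong[OF refl])
    fix j assume "j \<in> set [1..<k+1]"
    then have j: "j \<in> {1..k}" by auto
    then have wj: "w j \<in> {1..V}" using w by auto
    then have mn: "Min {w j, V+1} = w j" by auto
    show "(if V+1 \<in> ext_graph V E k s w (E+j) then (if V+1 = Min (ext_graph V E k s w (E+j)) then [fst (comb E k m mn (E+j))] else [snd (comb E k m mn (E+j))]) else [])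
        = [snd (mn j)]"
      using j wj mn by (auto simp: ext_graph_def comb_def)
  qed
  show ?thesis
    unfolding vertex_indices_def[of "E+k"] concat_split A B concat_single by simp
qed

lemma J_split:
  "(\<Prod>e\<in>{1..E+k}. g (comb E k m mn e)) = (\<Prod>e\<in>{1..E}. g (m e)) * (\<Prod>j\<in>{1..k}. g (mn j))"
proof -
  have u: "{1..E+k} = {1..E} \<union> {E+1..E+k}" by auto
  have "(\<Prod>e\<in>{1..E+k}. g (comb E k m mn e)) = (\<Prod>e\<in>{1..E}. g (comb E k m mn e)) * (\<Prod>e\<in>{E+1..E+k}. g (comb E k m mn e))"
    unfolding u by (rule prod.union_disjoint) auto
  also have "(\<Prod>e\<in>{1..E}. g (comb E k m mn e)) = (\<Prod>e\<in>{1..E}. g (m e))"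
    by (rule prod.cong) (auto simp: comb_def)
  also have "(\<Prod>e\<in>{E+1..E+k}. g (comb E k m mn e)) = (\<Prod>j\<in>{1..k}. g (comb E k m mn (j + E)))"
    using prod.shift_bounds_cl_nat_ivl[of "\<lambda>e. g (comb E k m mn e)" 1 E k] by (simp add: add.commute)
  also have "\<dots> = (\<Prod>j\<in>{1..k}. g (mn j))"
    by (rule prod.cong) (auto simp: comb_def)
  finally show ?thesis .
qed

lemma sum_comb:
  "(\<Sum>x\<in>Pi\<^sub>E {1..E} (\<lambda>_. A) \<times> Pi\<^sub>E {1..k} (\<lambda>_. A). h (comb E k (fst x) (snd x))) =
   (\<Sum>m'\<in>Pi\<^sub>E {1..E+k} (\<lambda>_. A). h m')"
proof (rule sum.reindex_bij_witness[where j="\<lambda>x. comb E k (fst x) (snd x)"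
      and i="\<lambda>m'. (restrict m' {1..E}, \<lambda>j\<in>{1..k}. m' (E+j))"])
  fix a assume a: "a \<in> Pi\<^sub>E {1..E} (\<lambda>_. A) \<times> Pi\<^sub>E {1..k} (\<lambda>_. A)"
  obtain m mn where am: "a = (m, mn)" by fastforce
  have m: "m \<in> Pi\<^sub>E {1..E} (\<lambda>_. A)" and mn: "mn \<in> Pi\<^sub>E {1..k} (\<lambda>_. A)" using a am by auto
  have "restrict (comb E k m mn) {1..E} = m"
  proof
    fix e show "restrict (comb E k m mn) {1..E} e = m e"
    proof (cases "e \<in> {1..E}")
      case True then show ?thesis by (simp add: comb_def)
    next
      case False then show ?thesis using PiE_arb[OF m False] unfolding restrict_def by (simp only: if_not_P[OF False] if_False)
    qed
  qed
  moreover have "(\<lambda>j\<in>{1..k}. comb E k m mn (E+j)) = mn"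
  proof
    fix j show "(\<lambda>j\<in>{1..k}. comb E k m mn (E+j)) j = mn j"
    proof (cases "j \<in> {1..k}")
      case True then show ?thesis by (simp add: comb_def)
    next
      case False then show ?thesis using PiE_arb[OF mn False] unfolding restrict_def by (simp only: if_not_P[OF False] if_False)
    qed
  qed
  ultimately show "(restrict (comb E k (fst a) (snd a)) {1..E}, \<lambda>j\<in>{1..k}. comb E k (fst a) (snd a) (E+j)) = a"
    by (simp add: am)
  have "comb E k m mn \<in> Pi\<^sub>E {1..E+k} (\<lambda>_. A)"
  proof (rule PiE_I)
    fix e assume e: "e \<in> {1..E+k}"
    show "comb E k m mn e \<in> A"
    proof (cases "e \<le> E")
      case True then show ?thesis using m e by (auto simp: comb_def)
    next
      case False then have "e - E \<in> {1..k}" using e by auto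
      then show ?thesis using mn e False by (auto simp: comb_def)
    qed
  next
    fix e assume e: "e \<notin> {1..E+k}"
    show "comb E k m mn e = undefined"
    proof (cases "e = 0")
      case True then show ?thesis using PiE_arb[OF m, of 0] by (simp add: comb_def)
    next
      case False then show ?thesis using e by (simp add: comb_def)
    qed
  qed
  then show "comb E k (fst a) (snd a) \<in> Pi\<^sub>E {1..E+k} (\<lambda>_. A)" by (simp add: am)
next
  fix b assume b: "b \<in> Pi\<^sub>E {1..E+k} (\<lambda>_. A)"
  show "comb E k (fst (restrict b {1..E}, \<lambda>j\<in>{1..k}. b (E+j))) (snd (restrict b {1..E}, \<lambda>j\<in>{1..k}. b (E+j))) = b"
  proof
    fix e
    show "comb E k (fst (restrict b {1..E}, \<lambda>j\<in>{1..k}. b (E+j))) (snd (restrict b {1..E}, \<lambda>j\<in>{1..k}. b (E+j))) e = b e"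
    proof (cases "e \<in> {1..E+k}")
      case True then show ?thesis by (auto simp: comb_def)
    next
      case False
      then have "b e = undefined" using PiE_arb[OF b] by simp
      moreover have "e = 0 \<or> e > E + k" using False by auto
      ultimately show ?thesis by (auto simp: comb_def)
    qed
  qed
  show "(restrict b {1..E}, \<lambda>j\<in>{1..k}. b (E+j)) \<in> Pi\<^sub>E {1..E} (\<lambda>_. A) \<times> Pi\<^sub>E {1..k} (\<lambda>_. A)"
    using b by auto
qed simp

lemma sum_graphs:
  assumes lg: "labeled_graph V E s"
  shows "(\<Sum>s' \<in> {s'. labeled_graph (V+1) (E+k) s' \<and> (\<forall>e\<in>{1..E}. s' e = s e) \<and>
                           (\<forall>e\<in>{E+1..E+k}. \<exists>w\<in>{1..V}. s' e = {w, V+1})}. H s')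
       = (\<Sum>w\<in>Pi\<^sub>E {1..k} (\<lambda>_. {1..V}). H (ext_graph V E k s w))"
proof (rule sym, rule sum.reindex_bij_witness[where j="ext_graph V E k s"
      and i="\<lambda>s'. \<lambda>j\<in>{1..k}. Min (s' (E+j))"])
  fix w assume w: "w \<in> Pi\<^sub>E {1..k} (\<lambda>_. {1..V})"
  show "(\<lambda>j\<in>{1..k}. Min (ext_graph V E k s w (E+j))) = w"
  proof
    fix j show "(\<lambda>j\<in>{1..k}. Min (ext_graph V E k s w (E+j))) j = w j"
    proof (cases "j \<in> {1..k}")
      case True
      then have "w j \<in> {1..V}" using w by auto
      then show ?thesis using True by (auto simp: ext_graph_def)
    next
      case False then show ?thesis using PiE_arb[OF w False] unfolding restrict_def by (simp only: if_not_P[OF False] if_False)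
    qed
  qed
  have lgs: "\<forall>e\<in>{1..E}. card (s e) = 2 \<and> s e \<subseteq> {1..V}" "\<forall>e. e \<notin> {1..E} \<longrightarrow> s e = {}"
    using lg by (auto simp: labeled_graph_def)
  have c1: "\<forall>e\<in>{1..E+k}. card (ext_graph V E k s w e) = 2 \<and> ext_graph V E k s w e \<subseteq> {1..V+1}"
  proof
    fix e assume e: "e \<in> {1..E+k}"
    show "card (ext_graph V E k s w e) = 2 \<and> ext_graph V E k s w e \<subseteq> {1..V+1}"
    proof (cases "e \<in> {E+1..E+k}")
      case True
      then have "e - E \<in> {1..k}" by auto
      then have "w (e - E) \<in> {1..V}" using PiE_mem[OF w] by blast
      moreover have "ext_graph V E k s w e = {w (e - E), V+1}" using True by (rule ext_graph_in)
      ultimately show ?thesis by auto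
    next
      case False
      then have e1: "e \<in> {1..E}" using e by auto
      have "ext_graph V E k s w e = s e" using False by (rule ext_graph_out)
      moreover have "card (s e) = 2" "s e \<subseteq> {1..V}" using lgs(1) e1 by auto
      ultimately show ?thesis by auto
    qed
  qed
  have c2: "\<forall>e. e \<notin> {1..E+k} \<longrightarrow> ext_graph V E k s w e = {}"
  proof (intro allI impI)
    fix e assume e: "e \<notin> {1..E+k}"
    then have "e \<notin> {E+1..E+k}" "e \<notin> {1..E}" by auto
    then show "ext_graph V E k s w e = {}" using lgs(2) by (simp add: ext_graph_out)
  qed
  have "labeled_graph (V+1) (E+k) (ext_graph V E k s w)"
    unfolding labeled_graph_def using c1 c2 by blast
  moreover have "\<forall>e\<in>{1..E}. ext_graph V E k s w e = s e"
  proof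
    fix e assume "e \<in> {1..E}"
    then have "e \<notin> {E+1..E+k}" by auto
    then show "ext_graph V E k s w e = s e" by (rule ext_graph_out)
  qed
  moreover have "\<forall>e\<in>{E+1..E+k}. \<exists>w'\<in>{1..V}. ext_graph V E k s w e = {w', V+1}"
  proof
    fix e assume e: "e \<in> {E+1..E+k}"
    then have "e - E \<in> {1..k}" by auto
    then have "w (e - E) \<in> {1..V}" using PiE_mem[OF w] by blast
    moreover have "ext_graph V E k s w e = {w (e - E), V+1}" using e by (rule ext_graph_in)
    ultimately show "\<exists>w'\<in>{1..V}. ext_graph V E k s w e = {w', V+1}" by blast
  qed
  ultimately show "ext_graph V E k s w \<in> {s'. labeled_graph (V+1) (E+k) s' \<and> (\<forall>e\<in>{1..E}. s' e = s e) \<and>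
                           (\<forall>e\<in>{E+1..E+k}. \<exists>w\<in>{1..V}. s' e = {w, V+1})}" by simp
next
  fix s' assume "s' \<in> {s'. labeled_graph (V+1) (E+k) s' \<and> (\<forall>e\<in>{1..E}. s' e = s e) \<and>
                           (\<forall>e\<in>{E+1..E+k}. \<exists>w\<in>{1..V}. s' e = {w, V+1})}"
  then have lg': "labeled_graph (V+1) (E+k) s'" and old: "\<forall>e\<in>{1..E}. s' e = s e"
    and new: "\<forall>e\<in>{E+1..E+k}. \<exists>w\<in>{1..V}. s' e = {w, V+1}" by auto
  show "ext_graph V E k s (\<lambda>j\<in>{1..k}. Min (s' (E+j))) = s'"
  proof
    fix e
    show "ext_graph V E k s (\<lambda>j\<in>{1..k}. Min (s' (E+j))) e = s' e"
    proof (cases "e \<in> {E+1..E+k}")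
      case True
      then obtain a where a: "a \<in> {1..V}" "s' e = {a, V+1}" using new by blast
      have h: "e - E \<in> {1..k}" "E + (e - E) = e" using True by auto
      have "Min {a, V+1} = a" using a(1) by auto
      then have "(\<lambda>j\<in>{1..k}. Min (s' (E+j))) (e - E) = a" using h a(2) by simp
      then show ?thesis using True a(2) by (simp add: ext_graph_def)
    next
      case False
      then have ee: "ext_graph V E k s (\<lambda>j\<in>{1..k}. Min (s' (E+j))) e = s e" by (rule ext_graph_out)
      show ?thesis
      proof (cases "e \<in> {1..E}")
        case True then show ?thesis using old ee by simp
      next
        case F2: False
        then have "e \<notin> {1..E+k}" using False by auto
        then have "s' e = {}" using lg' unfolding labeled_graph_def by blast
        moreover have "s e = {}" using F2 lg unfolding labeled_graph_def by blast
        ultimately show ?thesis using ee by simp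
      qed
    qed
  qed
  show "(\<lambda>j\<in>{1..k}. Min (s' (E+j))) \<in> Pi\<^sub>E {1..k} (\<lambda>_. {1..V})"
  proof
    fix j assume j: "j \<in> {1..k}"
    then have "E+j \<in> {E+1..E+k}" by auto
    then obtain a where a: "a \<in> {1..V}" "s' (E+j) = {a, V+1}" using new by blast
    have "Min {a, V+1} = a" using a(1) by auto
    then show "(\<lambda>j\<in>{1..k}. Min (s' (E+j))) j \<in> {1..V}" using j a by simp
  qed auto
qed simp

theorem lemma4:
  fixes V E k :: nat
    and s :: "nat \<Rightarrow> nat set"
    and C :: "nat \<Rightarrow> ('n::finite phase \<Rightarrow> complex)"
    and D :: "'n phase \<Rightarrow> complex"
  assumes "labeled_graph V E s"
    and "\<forall>v\<in>{1..V}. smooth_symbol (C v)"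
    and "smooth_symbol D"
  shows "\<forall>z. (\<Sum>mn \<in> Pi\<^sub>E {1..k} (\<lambda>_. (UNIV :: ('n idx \<times> 'n idx) set)).
              pds (map (\<lambda>j. fst (mn j)) [1..<k+1]) (lambda_graph V E s C) z *
              (\<Prod>j\<in>{1..k}. complex_of_real (Jmat (fst (mn j)) (snd (mn j)))) *
              pds (map (\<lambda>j. snd (mn j)) [1..<k+1]) D z)
           = (\<Sum>s' \<in> {s'. labeled_graph (V+1) (E+k) s' \<and> (\<forall>e\<in>{1..E}. s' e = s e) \<and>
                           (\<forall>e\<in>{E+1..E+k}. \<exists>w\<in>{1..V}. s' e = {w, V+1})}.
                lambda_graph (V+1) (E+k) s' (C(V+1 := D)) z)"
proof (intro allI)
  fix z
  note lg = assms(1)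
  define P where "P = Pi\<^sub>E {1..E} (\<lambda>_. (UNIV :: ('n idx \<times> 'n idx) set))"
  define Q where "Q = Pi\<^sub>E {1..k} (\<lambda>_. (UNIV :: ('n idx \<times> 'n idx) set))"
  define W where "W = Pi\<^sub>E {1..k} (\<lambda>_. {1..V})"
  define c where "c m = (\<Prod>e\<in>{1..E}. complex_of_real (Jmat (fst (m e)) (snd (m e))))" for m :: "nat \<Rightarrow> 'n idx \<times> 'n idx"
  define Jn where "Jn mn = (\<Prod>j\<in>{1..k}. complex_of_real (Jmat (fst (mn j)) (snd (mn j))))" for mn :: "nat \<Rightarrow> 'n idx \<times> 'n idx"
  define F where "F m = (\<lambda>z. \<Prod>v\<in>{1..V}. pds (vertex_indices E s m v) (C v) z)" for m :: "nat \<Rightarrow> 'n idx \<times> 'n idx"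
  define X where "X m mn w = (\<Prod>v\<in>{1..V}. pds (vertex_indices E s m v @ map (\<lambda>j. fst (mn j)) (filter (\<lambda>j. w j = v) [1..<k+1])) (C v) z)"
    for m mn :: "nat \<Rightarrow> 'n idx \<times> 'n idx" and w :: "nat \<Rightarrow> nat"
  define Dn where "Dn mn = pds (map (\<lambda>j. snd (mn j)) [1..<k+1]) D z" for mn :: "nat \<Rightarrow> 'n idx \<times> 'n idx"
  define T where "T m mn w = c m * Jn mn * X m mn w * Dn mn" for m mn w
  have finP: "finite P" unfolding P_def by (simp add: finite_PiE)
  have finQ: "finite Q" unfolding Q_def by (simp add: finite_PiE)
  have finW: "finite W" unfolding W_def by (simp add: finite_PiE)
  have lg_eq: "lambda_graph V E s C = (\<lambda>z. \<Sum>m\<in>P. c m * F m z)"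
    unfolding lambda_graph_def P_def c_def F_def ..
  have smF: "smooth_symbol (F m)" for m
    unfolding F_def by (rule smooth_prod) (use assms(2) in auto)
  have step1: "pds (map (\<lambda>j. fst (mn j)) [1..<k+1]) (lambda_graph V E s C) z = (\<Sum>m\<in>P. c m * (\<Sum>w\<in>W. X m mn w))" for mn
  proof -
    have "pds (map (\<lambda>j. fst (mn j)) [1..<k+1]) (lambda_graph V E s C) z =
        (\<Sum>m\<in>P. c m * pds (map (\<lambda>j. fst (mn j)) [1..<k+1]) (F m) z)"
      unfolding lg_eq pds_lin[OF finP smF] ..
    also have "\<dots> = (\<Sum>m\<in>P. c m * (\<Sum>w\<in>W. X m mn w))"
    proof (rule sum.cong[OF refl])
      fix m
      show "c m * pds (map (\<lambda>j. fst (mn j)) [1..<k+1]) (F m) z = c m * (\<Sum>w\<in>W. X m mn w)"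
        unfolding F_def W_def X_def
        using leibniz[of "{1..V}" C "\<lambda>j. fst (mn j)" k "vertex_indices E s m" z] assms(2) by simp
    qed
    finally show ?thesis .
  qed
  have LHS: "(\<Sum>mn \<in> Q. pds (map (\<lambda>j. fst (mn j)) [1..<k+1]) (lambda_graph V E s C) z * Jn mn * Dn mn)
     = (\<Sum>w\<in>W. \<Sum>m\<in>P. \<Sum>mn\<in>Q. T m mn w)"
  proof -
    have "(\<Sum>mn \<in> Q. pds (map (\<lambda>j. fst (mn j)) [1..<k+1]) (lambda_graph V E s C) z * Jn mn * Dn mn)
       = (\<Sum>mn \<in> Q. \<Sum>m\<in>P. \<Sum>w\<in>W. T m mn w)"
      unfolding step1 T_def by (simp add: sum_distrib_left sum_distrib_right ac_simps)
    also have "\<dots> = (\<Sum>m\<in>P. \<Sum>mn \<in> Q. \<Sum>w\<in>W. T m mn w)" by (rule sum.swap)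
    also have "\<dots> = (\<Sum>m\<in>P. \<Sum>w\<in>W. \<Sum>mn \<in> Q. T m mn w)" by (rule sum.cong[OF refl], rule sum.swap)
    also have "\<dots> = (\<Sum>w\<in>W. \<Sum>m\<in>P. \<Sum>mn \<in> Q. T m mn w)" by (rule sum.swap)
    finally show ?thesis .
  qed
  have step2: "lambda_graph (V+1) (E+k) (ext_graph V E k s w) (C(V+1 := D)) z = (\<Sum>m\<in>P. \<Sum>mn\<in>Q. T m mn w)"
    if w: "w \<in> W" for w
  proof -
    have "lambda_graph (V+1) (E+k) (ext_graph V E k s w) (C(V+1 := D)) z =
      (\<Sum>x\<in>P \<times> Q. (\<lambda>m'. (\<Prod>e\<in>{1..E+k}. complex_of_real (Jmat (fst (m' e)) (snd (m' e)))) *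
       (\<Prod>v\<in>{1..V+1}. pds (vertex_indices (E+k) (ext_graph V E k s w) m' v) ((C(V+1 := D)) v) z)) (comb E k (fst x) (snd x)))"
      unfolding lambda_graph_def P_def Q_def by (rule sum_comb[symmetric])
    also have "\<dots> = (\<Sum>x\<in>P \<times> Q. T (fst x) (snd x) w)"
    proof (rule sum.cong[OF refl])
      fix x assume "x \<in> P \<times> Q"
      obtain m mn where x: "x = (m, mn)" by fastforce
      have wW: "w \<in> Pi\<^sub>E {1..k} (\<lambda>_. {1..V})" using w W_def by simp
      have pr: "(\<Prod>v\<in>{1..V+1}. pds (vertex_indices (E+k) (ext_graph V E k s w) (comb E k m mn) v) ((C(V+1 := D)) v) z)
         = X m mn w * Dn mn"
      proof -
        have ins: "{1..V+1} = insert (V+1) {1..V}" by auto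
        have "(\<Prod>v\<in>{1..V}. pds (vertex_indices (E+k) (ext_graph V E k s w) (comb E k m mn) v) ((C(V+1 := D)) v) z) = X m mn w"
          unfolding X_def
        proof (rule prod.cong[OF refl])
          fix v assume v: "v \<in> {1..V}"
          then have "v \<noteq> V+1" by auto
          then show "pds (vertex_indices (E+k) (ext_graph V E k s w) (comb E k m mn) v) ((C(V+1 := D)) v) z =
             pds (vertex_indices E s m v @ map (\<lambda>j. fst (mn j)) (filter (\<lambda>j. w j = v) [1..<k+1])) (C v) z"
            using VI_old[OF lg wW v, of m mn] by simp
        qed
        moreover have "pds (vertex_indices (E+k) (ext_graph V E k s w) (comb E k m mn) (V+1)) ((C(V+1 := D)) (V+1)) z = Dn mn"
          unfolding Dn_def using VI_new[OF lg wW, of m mn] by simp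
        ultimately show ?thesis unfolding ins by (simp add: mult.commute)
      qed
      show "(\<lambda>m'. (\<Prod>e\<in>{1..E+k}. complex_of_real (Jmat (fst (m' e)) (snd (m' e)))) *
       (\<Prod>v\<in>{1..V+1}. pds (vertex_indices (E+k) (ext_graph V E k s w) m' v) ((C(V+1 := D)) v) z)) (comb E k (fst x) (snd x))
        = T (fst x) (snd x) w"
        unfolding x fst_conv snd_conv pr T_def c_def Jn_def
        using J_split[of "\<lambda>p. complex_of_real (Jmat (fst p) (snd p))" E k m mn] by (simp add: ac_simps)
    qed
    also have "\<dots> = (\<Sum>m\<in>P. \<Sum>mn\<in>Q. T m mn w)"
      by (simp add: sum.cartesian_product split_def)
    finally show ?thesis .
  qed
  show "(\<Sum>mn \<in> Pi\<^sub>E {1..k} (\<lambda>_. (UNIV :: ('n idx \<times> 'n idx) set)).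
              pds (map (\<lambda>j. fst (mn j)) [1..<k+1]) (lambda_graph V E s C) z *
              (\<Prod>j\<in>{1..k}. complex_of_real (Jmat (fst (mn j)) (snd (mn j)))) *
              pds (map (\<lambda>j. snd (mn j)) [1..<k+1]) D z)
           = (\<Sum>s' \<in> {s'. labeled_graph (V+1) (E+k) s' \<and> (\<forall>e\<in>{1..E}. s' e = s e) \<and>
                           (\<forall>e\<in>{E+1..E+k}. \<exists>w\<in>{1..V}. s' e = {w, V+1})}.
                lambda_graph (V+1) (E+k) s' (C(V+1 := D)) z)"
    unfolding sum_graphs[OF lg]
    using LHS step2 unfolding Q_def[symmetric] Jn_def[symmetric] Dn_def[symmetric] W_def[symmetric]
    by (simp add: Q_def Jn_def Dn_def W_def)
qed

end
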